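(* Let $d\geq 1000$, let $\Omega\subseteq\mathbb{R}^d$ be bounded and measurable, let $\lambda=\left(\frac{\sqrt d}{8\log d}\right)^d$ and $\Delta=2^d\lambda=\left(\frac{\sqrt d}{4\log d}\right)^d$, and let $\mathbf X$ be a Poisson point process of intensity $\lambda$ on $\Omega$. Then \[ \mathbb{E}\left|\left\{x\in\mathbf X: |\mathbf X\cap B_x(2r_d)|\geq\Delta\big(1+\Delta^{-1/3}\big)\right\}\right|\leq(2d)^{-1}\,\mathbb{E}|\mathbf X|. \]
   Context: $r_d$ is the radius of the Euclidean ball of volume $1$ in $\mathbb{R}^d$; $B_x(r)$ is the closed Euclidean ball of radius $r$ centred at $x$. $\log$ is the natural logarithm. *)

theory Defs
  imports "HOL-Analysis.Analysis" "HOL-Probability.Probability"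
begin

definition unit_vol_radius :: "'a::euclidean_space itself \<Rightarrow> real" where
  "unit_vol_radius _ = (THE r. r > 0 \<and> measure lborel (cball (0::'a) r) = 1)"

definition npts :: "'a set \<Rightarrow> 'a set \<Rightarrow> nat" where
  "npts S A = card (S \<inter> A)"

definition poisson_pp :: "'w measure \<Rightarrow> ('w \<Rightarrow> 'a::euclidean_space set) \<Rightarrow> real \<Rightarrow> 'a set \<Rightarrow> bool" where
  "poisson_pp M X lam Omega \<longleftrightarrow>
     prob_space M \<and>
     (\<forall>\<omega>\<in>space M. X \<omega> \<subseteq> Omega) \<and>
     (AE \<omega> in M. finite (X \<omega>)) \<and>
     (\<forall>A \<in> sets borel. (\<lambda>\<omega>. npts (X \<omega>) A) \<in> measurable M (count_space UNIV)) \<and>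
     (\<forall>A \<in> sets borel. \<forall>k::nat.
        measure M {\<omega>\<in>space M. npts (X \<omega>) A = k} =
          (lam * measure lebesgue (A \<inter> Omega)) ^ k / fact k * exp (- (lam * measure lebesgue (A \<inter> Omega)))) \<and>
     (\<forall>(F::nat \<Rightarrow> 'a set) n. (\<forall>i<n. F i \<in> sets borel) \<and> disjoint_family_on F {..<n} \<longrightarrow>
        prob_space.indep_vars M (\<lambda>_. count_space UNIV) (\<lambda>i \<omega>. npts (X \<omega>) (F i)) {..<n})"

end

theory Submission
  imports Defs
begin

lemma ennreal_sums_eq: "f sums s \<Longrightarrow> (\<And>k. 0 \<le> f k) \<Longrightarrow> (\<Sum>k. ennreal (f k)) = ennreal s"
  using suminf_ennreal2 sums_summable sums_unique by metis

lemma exp_sums': "(\<lambda>k. y^k / fact k) sums exp (y::real)"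
  using exp_converges[of y] by (simp add: divide_inverse mult.commute)

lemma pois_mgf:
  fixes a x :: real assumes "0 \<le> a" "0 \<le> x"
  shows "(\<Sum>k. ennreal (x^k) * ennreal (a^k / fact k * exp(-a))) = ennreal (exp (a*(x-1)))"
proof -
  have S0: "(\<lambda>k. (a*x)^k / fact k * exp(-a)) sums (exp (a*x) * exp(-a))"
    by (rule sums_mult2[OF exp_sums'])
  have E2: "exp (a*x) * exp(-a) = exp (a*(x-1))"
    by (simp add: exp_add[symmetric] algebra_simps)
  have E1: "(\<lambda>k. (a*x)^k / fact k * exp(-a)) = (\<lambda>k. x^k * (a^k / fact k * exp(-a)))"
    by (simp add: fun_eq_iff power_mult_distrib)
  have S: "(\<lambda>k. x^k * (a^k / fact k * exp(-a))) sums exp (a*(x-1))"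
    using S0 unfolding E1 E2 .
  have "(\<Sum>k. ennreal (x^k) * ennreal (a^k / fact k * exp(-a))) = (\<Sum>k. ennreal (x^k * (a^k / fact k * exp(-a))))"
    by (rule suminf_cong, rule ennreal_mult[symmetric]) (use assms in auto)
  also have "\<dots> = ennreal (exp (a*(x-1)))"
    by (rule ennreal_sums_eq) (use assms S in auto)
  finally show ?thesis .
qed

lemma pois_mgf1:
  fixes a x :: real assumes "0 \<le> a" "0 \<le> x"
  shows "(\<Sum>k. ennreal (real k * x^k) * ennreal (a^k / fact k * exp(-a))) = ennreal (a * x * exp (a*(x-1)))"
proof -
  let ?g = "\<lambda>k. real k * x^k * (a^k / fact k * exp(-a))"
  have S0: "(\<lambda>k. (a*x)^k / fact k * (a*x*exp(-a))) sums (exp (a*x) * (a*x*exp(-a)))"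
    by (rule sums_mult2[OF exp_sums'])
  have E2: "exp (a*x) * (a*x*exp(-a)) = a*x*exp (a*(x-1))"
    by (simp add: exp_add[symmetric] algebra_simps)
  have E1: "?g (Suc k) = (a*x)^k / fact k * (a*x*exp(-a))" for k
  proof -
    have f: "real (Suc k) / fact (Suc k) = (1::real) / fact k"
      by (simp add: field_simps del: of_nat_Suc)
    have "?g (Suc k) = (real (Suc k) / fact (Suc k)) * ((a*x)^k * (a*x*exp(-a)))"
      by (simp add: power_mult_distrib field_simps del: of_nat_Suc fact_Suc)
    also have "\<dots> = (a*x)^k / fact k * (a*x*exp(-a))" by (simp add: f)
    finally show ?thesis .
  qed
  have "(\<lambda>k. ?g (Suc k)) sums (a*x*exp (a*(x-1)))"
    using S0 unfolding E1[symmetric] E2 .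
  then have "?g sums (a*x*exp (a*(x-1)) + ?g 0)"
    by (subst sums_Suc_iff[symmetric])
  then have S: "?g sums (a*x*exp (a*(x-1)))" by simp
  have "(\<Sum>k. ennreal (real k * x^k) * ennreal (a^k / fact k * exp(-a))) = (\<Sum>k. ennreal (?g k))"
    by (rule suminf_cong, rule ennreal_mult[symmetric]) (use assms in auto)
  also have "\<dots> = ennreal (a*x*exp (a*(x-1)))"
    by (rule ennreal_sums_eq) (use assms S in auto)
  finally show ?thesis .
qed


lemma pois_integral:
  fixes N :: "'w \<Rightarrow> nat" and f :: "nat \<Rightarrow> ennreal"
  assumes P: "prob_space M" and Nm: "N \<in> measurable M (count_space UNIV)"
    and law: "\<And>k. measure M {\<omega>\<in>space M. N \<omega> = k} = a^k / fact k * exp(-a)"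
  shows "(\<integral>\<^sup>+\<omega>. f (N \<omega>) \<partial>M) = (\<Sum>k. f k * ennreal (a^k / fact k * exp(-a)))"
proof -
  have S: "{\<omega>\<in>space M. N \<omega> = k} \<in> sets M" for k
    using Nm by measurable
  have "(\<integral>\<^sup>+\<omega>. f (N \<omega>) \<partial>M) = (\<integral>\<^sup>+\<omega>. (\<Sum>k. f k * indicator {\<omega>\<in>space M. N \<omega> = k} \<omega>) \<partial>M)"
  proof (rule nn_integral_cong)
    fix \<omega> assume "\<omega> \<in> space M"
    then have "(\<lambda>k. f k * indicator {\<omega>\<in>space M. N \<omega> = k} \<omega>) = (\<lambda>k. if k = N \<omega> then f k else 0)"
      by (auto simp: indicator_def)
    then show "f (N \<omega>) = (\<Sum>k. f k * indicator {\<omega>\<in>space M. N \<omega> = k} \<omega>)"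
      using sums_unique[OF sums_single[of "N \<omega>" f]] by simp
  qed
  also have "\<dots> = (\<Sum>k. \<integral>\<^sup>+\<omega>. f k * indicator {\<omega>\<in>space M. N \<omega> = k} \<omega> \<partial>M)"
    by (rule nn_integral_suminf) (use S in auto)
  also have "\<dots> = (\<Sum>k. f k * emeasure M {\<omega>\<in>space M. N \<omega> = k})"
    using S by (simp add: nn_integral_cmult_indicator)
  also have "\<dots> = (\<Sum>k. f k * ennreal (a^k / fact k * exp(-a)))"
  proof - interpret prob_space M by (rule P) show ?thesis using emeasure_eq_measure law by simp qed
  finally show ?thesis .
qed

lemma cell_bound:
  fixes Y :: "nat \<Rightarrow> 'w \<Rightarrow> nat" and a b \<theta> t :: real
  assumes P: "prob_space M"
   and Ym: "\<And>i. Y i \<in> measurable M (count_space UNIV)"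
   and ind: "prob_space.indep_vars M (\<lambda>_. count_space UNIV) Y {..<2}"
   and law0: "\<And>k. measure M {\<omega>\<in>space M. Y 0 \<omega> = k} = a^k / fact k * exp(-a)"
   and law1: "\<And>k. measure M {\<omega>\<in>space M. Y 1 \<omega> = k} = b^k / fact k * exp(-b)"
   and ab: "0 \<le> a" "0 \<le> b" and th: "1 \<le> \<theta>"
  shows "(\<integral>\<^sup>+\<omega>. ennreal (real (Y 0 \<omega>)) * (if t \<le> real (Y 0 \<omega> + Y 1 \<omega>) then 1 else 0) \<partial>M)
     \<le> ennreal (a * (\<theta> powr (1 - t) * exp ((a+b)*(\<theta>-1))))"
proof -
  interpret prob_space M by (rule P)
  define Z where "Z i = (if i = (0::nat) then (\<lambda>k::nat. ennreal (real k * \<theta>^k)) else (\<lambda>k. ennreal (\<theta>^k)))" for i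
  have pw: "ennreal (real k) * (if t \<le> real (k + m) then 1 else 0) \<le> ennreal (\<theta> powr (-t)) * (Z 0 k * Z 1 m)" for k m
  proof (cases "t \<le> real (k + m)")
    case True
    have "\<theta> powr t \<le> \<theta> powr real (k+m)" using True th by (intro powr_mono) auto
    also have "\<dots> = \<theta>^k * \<theta>^m" using th by (subst powr_realpow) (auto simp: power_add)
    finally have "1 \<le> \<theta> powr (-t) * (\<theta>^k * \<theta>^m)"
      using th by (simp add: powr_minus field_simps)
    then have "real k \<le> \<theta> powr (-t) * (real k * \<theta>^k * \<theta>^m)"
      using mult_left_mono[of 1 "\<theta> powr (-t) * (\<theta>^k * \<theta>^m)" "real k"] by (simp add: mult_ac)
    then show ?thesis using True th
      by (simp add: Z_def ennreal_mult[symmetric] ennreal_leI)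
  qed simp
  have "(\<integral>\<^sup>+\<omega>. ennreal (real (Y 0 \<omega>)) * (if t \<le> real (Y 0 \<omega> + Y 1 \<omega>) then 1 else 0) \<partial>M)
      \<le> (\<integral>\<^sup>+\<omega>. ennreal (\<theta> powr (-t)) * (\<Prod>i\<in>{..<2}. Z i (Y i \<omega>)) \<partial>M)"
  proof (rule nn_integral_mono)
    fix \<omega>
    have "(\<Prod>i\<in>{..<2}. Z i (Y i \<omega>)) = Z 0 (Y 0 \<omega>) * Z 1 (Y 1 \<omega>)"
      by (simp add: numeral_2_eq_2 lessThan_Suc mult.commute)
    then show "ennreal (real (Y 0 \<omega>)) * (if t \<le> real (Y 0 \<omega> + Y 1 \<omega>) then 1 else 0)
       \<le> ennreal (\<theta> powr (-t)) * (\<Prod>i\<in>{..<2}. Z i (Y i \<omega>))"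
      using pw[of "Y 0 \<omega>" "Y 1 \<omega>"] by simp
  qed
  also have "\<dots> = ennreal (\<theta> powr (-t)) * (\<integral>\<^sup>+\<omega>. (\<Prod>i\<in>{..<2}. Z i (Y i \<omega>)) \<partial>M)"
    by (rule nn_integral_cmult) (use Ym in \<open>auto simp: Z_def\<close>)
  also have "(\<integral>\<^sup>+\<omega>. (\<Prod>i\<in>{..<2}. Z i (Y i \<omega>)) \<partial>M) = (\<Prod>i\<in>{..<2}. \<integral>\<^sup>+\<omega>. Z i (Y i \<omega>) \<partial>M)"
    by (rule indep_vars_nn_integral) (auto intro!: indep_vars_compose2[OF ind])
  also have "\<dots> = (\<integral>\<^sup>+\<omega>. Z 0 (Y 0 \<omega>) \<partial>M) * (\<integral>\<^sup>+\<omega>. Z 1 (Y 1 \<omega>) \<partial>M)"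
    by (simp add: numeral_2_eq_2 lessThan_Suc mult.commute)
  also have "(\<integral>\<^sup>+\<omega>. Z 0 (Y 0 \<omega>) \<partial>M) = ennreal (a * \<theta> * exp (a*(\<theta>-1)))"
    using pois_integral[OF P Ym law0, of "Z 0"] pois_mgf1[OF ab(1), of \<theta>] th by (simp add: Z_def)
  also have "(\<integral>\<^sup>+\<omega>. Z 1 (Y 1 \<omega>) \<partial>M) = ennreal (exp (b*(\<theta>-1)))"
    using pois_integral[OF P Ym law1, of "Z 1"] pois_mgf[OF ab(2), of \<theta>] th by (simp add: Z_def)
  also have "ennreal (\<theta> powr (-t)) * (ennreal (a * \<theta> * exp (a*(\<theta>-1))) * ennreal (exp (b*(\<theta>-1))))
     = ennreal (a * (\<theta> powr (1 - t) * exp ((a+b)*(\<theta>-1))))"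
  proof -
    have "\<theta> powr (-t) * (a * \<theta> * exp (a*(\<theta>-1)) * exp (b*(\<theta>-1))) = a * ((\<theta> powr (-t) * \<theta>) * exp ((a+b)*(\<theta>-1)))"
      by (simp add: exp_add[symmetric] algebra_simps)
    also have "\<theta> powr (-t) * \<theta> = \<theta> powr (1 - t)" using th powr_add[of \<theta> "-t" 1] by simp
    finally show ?thesis using th ab by (simp add: ennreal_mult[symmetric])
  qed
  finally show ?thesis .
qed


lemma numeric_tail:
  fixes D dd :: real
  assumes d1: "dd \<ge> 1" and D8: "D \<ge> 8*dd"
  shows "(1 + 1/(2*D)) powr (1 - (D^3 + D^2)) * exp ((D^3 + D) * (1/(2*D))) \<le> 1/(2*dd)"
proof -
  define h where "h = 1/(2*D)"
  have Dpos: "D \<ge> 8" using d1 D8 by simp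
  have h0: "0 \<le> h" "h \<le> 1" using Dpos by (auto simp: h_def)
  have hsm: "h \<le> 1/16" using Dpos by (simp add: h_def field_simps)
  have L: "h - h^2 \<le> ln (1 + h)" using ln_one_plus_pos_lower_bound[OF h0] .
  have "1 \<le> D^3" using Dpos by (simp add: one_le_power)
  then have t1: "0 \<le> D^3 + D^2 - 1" by (simp add: add_increasing2)
  have "(D^3 + D^2 - 1) * (h - h^2) \<le> (D^3 + D^2 - 1) * ln (1+h)"
    using mult_left_mono[OF L t1] .
  moreover have "(D^3 + D^2 - 1) * (h - h^2) = D^2/2 + D/4 - 1/4 - h + h^2"
    using Dpos by (simp add: h_def field_simps power2_eq_square power3_eq_cube)
  moreover have "(D^3 + D) * h = D^2/2 + 1/2"
    using Dpos by (simp add: h_def field_simps power2_eq_square power3_eq_cube)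
  moreover have "(1 - (D^3 + D^2)) * ln (1+h) = - ((D^3 + D^2 - 1) * ln (1+h))" by (simp add: algebra_simps)
  moreover have "0 \<le> h^2" by simp
  ultimately have E: "(1 - (D^3 + D^2)) * ln (1+h) + (D^3 + D) * h \<le> - D/4 + 3/4 + h"
    by linarith
  have lnd: "ln (2*dd) \<le> 2*dd - 1" using d1 ln_le_minus_one[of "2*dd"] by simp
  have E2: "(1 - (D^3 + D^2)) * ln (1+h) + (D^3 + D) * h \<le> - ln (2*dd)"
    using E lnd D8 hsm by linarith
  have "(1 + h) powr (1 - (D^3 + D^2)) * exp ((D^3 + D) * h)
      = exp ((1 - (D^3 + D^2)) * ln (1+h) + (D^3 + D) * h)"
    using h0 by (simp add: powr_def exp_add)
  also have "\<dots> \<le> exp (- ln (2*dd))" using E2 by simp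
  also have "\<dots> = 1/(2*dd)" using d1 by (simp add: exp_minus inverse_eq_divide)
  finally show ?thesis by (simp add: h_def)
qed


lemma ln1000: "ln (1000::real) \<le> 15/2"
proof -
  have "(1 + (15/2) / real (100::nat)) ^ 100 \<le> exp (15/2::real)"
    by (rule exp_ge_one_plus_x_over_n_power_n) auto
  moreover have "(1000::real) \<le> (1 + (15/2) / real (100::nat)) ^ 100" by (simp add: power_divide)
  ultimately have "(1000::real) \<le> exp (15/2)" by linarith
  then show ?thesis using ln_le_cancel_iff[of 1000 "exp (15/2)"] by simp
qed

lemma beta_bound:
  fixes x :: real assumes x: "x \<ge> 1000"
  shows "21/20 \<le> sqrt x / (4 * ln x)"
proof -
  define s where "s = sqrt x"
  define s0 where "s0 = sqrt (1000::real)"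
  have s0b: "158/5 \<le> s0" unfolding s0_def by (rule real_le_rsqrt) (simp add: power2_eq_square)
  have ss0: "s0 \<le> s" unfolding s_def s0_def using x by simp
  have s0pos: "0 < s0" using s0b by simp
  have lnx: "ln x = 2 * ln s" unfolding s_def using x by (simp add: ln_sqrt)
  have lns0: "ln s0 = ln 1000 / 2" unfolding s0_def by (simp add: ln_sqrt)
  have "ln (s / s0) \<le> s / s0 - 1" using s0pos ss0 by (intro ln_le_minus_one) simp
  then have "ln s \<le> ln s0 + s / s0 - 1" using s0pos ss0 by (simp add: ln_div)
  then have "ln x \<le> 2 * (15/4 + s/s0 - 1)" using lnx lns0 ln1000 by simp
  also have "s/s0 \<le> s / (158/5)" using s0b ss0 s0pos by (intro divide_left_mono) auto
  finally have l: "ln x \<le> 11/2 + 2 * s * 5/158" by simp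
  have "84/20 * ln x \<le> s" using l ss0 s0b by simp
  moreover have "0 < ln x" using x by simp
  ultimately show ?thesis by (simp add: s_def field_simps)
qed

lemma pow_bound:
  fixes n :: nat assumes "1000 \<le> n"
  shows "512 * real n ^ 3 \<le> (21/20) ^ n"
  using assms
proof (induction n rule: dec_induct)
  case base
  have a: "(2::real) \<le> (21/20)^20" by (simp add: power_divide)
  have "(2::real)^50 \<le> ((21/20)^20)^50" by (rule power_mono[OF a]) simp
  also have "\<dots> = (21/20::real)^1000" by (simp flip: power_mult)
  finally show ?case by simp
next
  case (step n)
  have n: "1000 \<le> real n" using step by simp
  have "512 * real (Suc n) ^ 3 = 512 * (real n ^ 3 + 3 * real n ^ 2 + 3 * real n + 1)"
    by (simp add: power3_eq_cube power2_eq_square algebra_simps)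
  also have "\<dots> \<le> 512 * (21/20 * real n ^ 3)"
  proof -
    have "4 * real n \<le> real n * real n" using mult_right_mono[of 4 "real n" "real n"] n by simp
    then have "3 * real n + 1 \<le> real n * real n" using n by linarith
    then have "3 * real n + 1 \<le> real n ^ 2" by (simp add: power2_eq_square)
    moreover have "80 * real n ^ 2 \<le> real n * real n ^ 2" using mult_right_mono[of 80 "real n" "real n ^ 2"] n by simp
    then have "4 * real n ^ 2 \<le> 1/20 * real n ^ 3" by (simp add: power3_eq_cube power2_eq_square)
    ultimately show ?thesis by simp
  qed
  also have "\<dots> \<le> 21/20 * (21/20)^n" using step by simp
  finally show ?case by simp
qed


lemma measure_cball_formula:
  fixes c :: "'a::euclidean_space" assumes "0 \<le> \<rho>"
  shows "measure lborel (cball c \<rho>) = unit_ball_vol (real DIM('a)) * \<rho> ^ DIM('a)"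
  using emeasure_cball[OF assms, of c] assms by (simp add: measure_def)

lemma radius_props:
  shows "unit_vol_radius TYPE('a::euclidean_space) > 0 \<and>
         unit_ball_vol (real DIM('a)) * unit_vol_radius TYPE('a) ^ DIM('a) = 1"
proof -
  define U where "U = unit_ball_vol (real DIM('a))"
  have U: "U > 0" by (simp add: U_def)
  define r0 where "r0 = (1/U) powr (1 / real DIM('a))"
  have r0: "r0 > 0" using U by (simp add: r0_def)
  have r0d: "r0 ^ DIM('a) = 1/U"
  proof -
    have "r0 ^ DIM('a) = r0 powr real DIM('a)" using r0 by (simp add: powr_realpow)
    also have "\<dots> = 1/U" using U by (simp add: r0_def powr_powr)
    finally show ?thesis .
  qed
  have P: "\<And>r. (r > 0 \<and> measure lborel (cball (0::'a) r) = 1) \<longleftrightarrow> (r > 0 \<and> U * r ^ DIM('a) = 1)"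
    using measure_cball_formula[of _ "0::'a"] by (auto simp: U_def)
  have "U * r0 ^ DIM('a) = 1" using r0d U by simp
  then have ex: "r0 > 0 \<and> measure lborel (cball (0::'a) r0) = 1"
    using P[of r0] r0 by blast
  have uniq: "r = r0" if "r > 0 \<and> measure lborel (cball (0::'a) r) = 1" for r
  proof -
    have "U * r ^ DIM('a) = 1" using that P[of r] by blast
    then have "r ^ DIM('a) = 1/U" using U by (simp add: field_simps)
    then have "r ^ DIM('a) = r0 ^ DIM('a)" using r0d by simp
    moreover have "0 \<le> r" "0 \<le> r0" using that r0 by auto
    ultimately show ?thesis using power_eq_imp_eq_base DIM_positive by blast
  qed
  have "unit_vol_radius TYPE('a) = r0"
    unfolding unit_vol_radius_def 
    apply (rule the_equality)
     apply (rule ex)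
    apply (erule uniq)
    done
  moreover have "U * r0 ^ DIM('a) = 1" using r0d U by simp
  ultimately show ?thesis using r0 unfolding U_def by simp
qed



theorem lemma2p2:
  fixes M :: "'w measure" and X :: "'w \<Rightarrow> 'a::euclidean_space set"
    and Omega :: "'a set" and lam Delta :: real
  assumes "DIM('a) \<ge> 1000"
    and "bounded Omega" and "Omega \<in> sets lebesgue"
    and "lam = (sqrt (real DIM('a)) / (8 * ln (real DIM('a)))) ^ DIM('a)"
    and "Delta = 2 ^ DIM('a) * lam"
    and "poisson_pp M X lam Omega"
  shows "(\<integral>\<^sup>+ \<omega>. ennreal (real (card {x \<in> X \<omega>.
              real (npts (X \<omega>) (cball x (2 * unit_vol_radius TYPE('a))))
                \<ge> Delta * (1 + Delta powr (-1/3))})) \<partial>M)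
         \<le> ennreal (1 / (2 * real DIM('a))) * (\<integral>\<^sup>+ \<omega>. ennreal (real (card (X \<omega>))) \<partial>M)"
proof -
  note pp = assms(6)[unfolded poisson_pp_def]
  have P: "prob_space M" using pp by (rule conjunct1)
  interpret prob_space M by (rule P)
  note pp2 = pp[THEN conjunct2]
  have Xs0: "\<forall>\<omega>\<in>space M. X \<omega> \<subseteq> Omega" using pp2 by (rule conjunct1)
  note pp3 = pp2[THEN conjunct2]
  have fin: "AE \<omega> in M. finite (X \<omega>)" using pp3 by (rule conjunct1)
  note pp4 = pp3[THEN conjunct2]
  have meas0: "\<forall>A \<in> sets borel. (\<lambda>\<omega>. npts (X \<omega>) A) \<in> measurable M (count_space UNIV)"
    using pp4 by (rule conjunct1)
  note pp5 = pp4[THEN conjunct2]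
  note law0 = pp5[THEN conjunct1]
  note indep0 = pp5[THEN conjunct2]
  have Xsub: "\<And>\<omega>. \<omega> \<in> space M \<Longrightarrow> X \<omega> \<subseteq> Omega" using Xs0 by blast
  have meas: "\<And>A. A \<in> sets borel \<Longrightarrow> (\<lambda>\<omega>. npts (X \<omega>) A) \<in> measurable M (count_space UNIV)"
    using meas0 by blast
  have law: "\<And>A k. A \<in> sets borel \<Longrightarrow> measure M {\<omega>\<in>space M. npts (X \<omega>) A = k} =
     (lam * measure lebesgue (A \<inter> Omega)) ^ k / fact k * exp (- (lam * measure lebesgue (A \<inter> Omega)))"
    using law0 by blast
  have indep: "indep_vars (\<lambda>_. count_space UNIV) (\<lambda>i \<omega>. npts (X \<omega>) (F i)) {..<n}"
    if "\<forall>i<n. F i \<in> sets borel" "disjoint_family_on F {..<n}" for F :: "nat \<Rightarrow> 'a set" and n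
    using mp[OF spec[OF spec[OF indep0, of F], of n] conjI[OF that]] .

  define d where "d = DIM('a)"
  have d1000: "1000 \<le> d" using assms(1) d_def by simp
  have dpos: "(1::real) \<le> real d" using d1000 by simp
  define r where "r = unit_vol_radius TYPE('a)"
  define U where "U = unit_ball_vol (real d)"
  have r0: "r > 0" and Ur: "U * r^d = 1" using radius_props[where 'a='a] by (auto simp: r_def U_def d_def)
  have mc: "\<And>(c::'a) \<rho>. 0 \<le> \<rho> \<Longrightarrow> measure lborel (cball c \<rho>) = U * \<rho>^d"
    using measure_cball_formula by (simp add: U_def d_def)

  have lnd: "0 < ln (real d)" using d1000 by simp
  define \<beta> where "\<beta> = sqrt (real d) / (4 * ln (real d))"
  have \<beta>: "21/20 \<le> \<beta>" using beta_bound[of "real d"] d1000 by (simp add: \<beta>_def)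
  have lam_eq: "lam = (sqrt (real d) / (8 * ln (real d))) ^ d" using assms(4) d_def by simp
  have lam0: "0 \<le> lam" using lam_eq lnd by simp
  have Delta_eq: "Delta = \<beta> ^ d"
  proof -
    have "Delta = 2^d * (sqrt (real d) / (8 * ln (real d))) ^ d"
      using assms(5) lam_eq d_def by simp
    also have "\<dots> = (2 * (sqrt (real d) / (8 * ln (real d)))) ^ d"
      by (simp only: power_mult_distrib)
    also have "2 * (sqrt (real d) / (8 * ln (real d))) = \<beta>" by (simp add: \<beta>_def)
    finally show ?thesis .
  qed
  have Dbig: "(8 * real d)^3 \<le> Delta"
  proof -
    have "(8 * real d)^3 = 512 * real d ^ 3" by (simp add: power_mult_distrib)
    also have "\<dots> \<le> (21/20)^d" using pow_bound d1000 by simp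
    also have "\<dots> \<le> \<beta>^d" using \<beta> by (intro power_mono) auto
    finally show ?thesis using Delta_eq by simp
  qed
  have Dpos: "0 < Delta" using Dbig dpos by (smt (verit) zero_less_power)
  define D where "D = Delta powr (1/3)"
  have Dp: "0 < D" using Dpos by (simp add: D_def)
  have D3: "D^3 = Delta"
  proof -
    have "D^3 = D powr (real 3)" using Dp by (simp add: powr_realpow)
    also have "\<dots> = Delta" using Dpos by (simp add: D_def powr_powr)
    finally show ?thesis .
  qed
  have D8: "8 * real d \<le> D"
  proof -
    have "((8 * real d)^3) powr (1/3) \<le> Delta powr (1/3)"
      using Dbig dpos by (intro powr_mono2) auto
    moreover have "((8 * real d)^3) powr (1/3) = 8 * real d"
    proof -
      have e: "(8 * real d)^3 = (8 * real d) powr 3" using dpos powr_realpow[of "8 * real d" 3] by simp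
      show ?thesis using dpos by (simp only: e powr_powr) simp
    qed
    ultimately show ?thesis by (simp add: D_def)
  qed
  define t where "t = D^3 + D^2"
  have thr: "Delta * (1 + Delta powr (-1/3)) = t"
  proof -
    have "Delta powr (-1/3) = 1 / D" using Dpos by (simp add: D_def powr_minus_divide)
    then show ?thesis using Dp D3[symmetric] by (simp add: t_def field_simps power2_eq_square power3_eq_cube)
  qed
  define \<eta> where "\<eta> = 1 / D^2"
  have \<eta>0: "0 < \<eta>" using Dp by (simp add: \<eta>_def)
  define \<rho> where "\<rho> = 2*r * (1+\<eta>) powr (1/real d)"
  have \<rho>gt: "2*r < \<rho>"
  proof -
    have "1 < (1+\<eta>) powr (1/real d)" using \<eta>0 dpos by simp
    then show ?thesis using r0 by (simp add: \<rho>_def)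
  qed
  define \<delta> where "\<delta> = \<rho> - 2*r"
  have \<delta>0: "0 < \<delta>" using \<rho>gt by (simp add: \<delta>_def)
  have mB: "\<And>c::'a. lam * measure lborel (cball c \<rho>) = D^3 + D"
  proof -
    fix c :: 'a
    have pw: "((1+\<eta>) powr (1/real d)) ^ d = 1 + \<eta>"
    proof -
      have "((1+\<eta>) powr (1/real d)) ^ d = ((1+\<eta>) powr (1/real d)) powr (real d)"
        using \<eta>0 by (simp add: powr_realpow)
      also have "\<dots> = 1 + \<eta>" using \<eta>0 dpos by (simp add: powr_powr)
      finally show ?thesis .
    qed
    have "measure lborel (cball c \<rho>) = U * \<rho>^d" using \<rho>gt r0 by (intro mc) simp
    also have "\<dots> = (U * r^d) * 2^d * (1+\<eta>)" by (simp add: \<rho>_def power_mult_distrib pw)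
    also have "\<dots> = 2^d * (1+\<eta>)" using Ur by simp
    finally have "lam * measure lborel (cball c \<rho>) = (2^d * lam) * (1+\<eta>)" by simp
    also have "2^d * lam = D^3" using D3 assms(5) d_def by simp
    also have "D^3 * (1+\<eta>) = D^3 + D"
      using Dp by (simp add: \<eta>_def field_simps power2_eq_square power3_eq_cube)
    finally show "lam * measure lborel (cball c \<rho>) = D^3 + D" .
  qed
  have "compact (closure Omega)" using assms(2) by simp
  then have "seq_compact (closure Omega)" by (rule compact_imp_seq_compact)
  from seq_compact_imp_totally_bounded[OF this] \<delta>0 obtain K where
    K: "finite K" "closure Omega \<subseteq> (\<Union>x\<in>K. ball x \<delta>)" by blast
  from finite_imp_nat_seg_image_inj_on[OF K(1)] obtain n :: nat and c where Kc: "K = c ` {i. i < n}" by blast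
  have cov: "\<exists>j<n. x \<in> ball (c j) \<delta>" if "x \<in> Omega" for x
  proof -
    have "x \<in> closure Omega" using that closure_subset by blast
    then obtain y where "y \<in> K" "x \<in> ball y \<delta>" using K(2) by blast
    then obtain j where "j < n" "y = c j" using Kc by blast
    then show ?thesis using \<open>x \<in> ball y \<delta>\<close> by blast
  qed
  define Q where "Q j = ball (c j) \<delta> - (\<Union>i<j. ball (c i) \<delta>)" for j
  define B where "B j = cball (c j) \<rho>" for j
  define Rs where "Rs j = B j - Q j" for j
  have Qb: "Q j \<in> sets borel" for j
    unfolding Q_def by (intro sets.Diff sets.finite_UN borel_open open_ball) auto
  have Bb: "B j \<in> sets borel" for j
    unfolding B_def by (intro borel_closed closed_cball)
  have Rb: "Rs j \<in> sets borel" for j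
    unfolding Rs_def using Qb Bb by (intro sets.Diff)
  have QB: "Q j \<subseteq> B j" for j
    using \<rho>gt r0 by (auto simp: Q_def B_def \<delta>_def)
  have Qdisj: "Q i \<inter> Q j = {}" if "i \<noteq> j" for i j
  proof (cases "i < j")
    case True then show ?thesis by (auto simp: Q_def)
  next
    case False then have "j < i" using that by simp
    then show ?thesis by (auto simp: Q_def)
  qed
  have Qcov: "\<exists>j<n. x \<in> Q j" if xO: "x \<in> Omega" for x
  proof -
    obtain j0 where j0: "j0 < n" "x \<in> ball (c j0) \<delta>" using cov[OF xO] by blast
    define j where "j = (LEAST j. x \<in> ball (c j) \<delta>)"
    have "x \<in> ball (c j) \<delta>" unfolding j_def using j0(2) by (rule LeastI)
    moreover have "j \<le> j0" unfolding j_def using j0(2) by (rule Least_le)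
    moreover have "x \<notin> ball (c i) \<delta>" if "i < j" for i
      using not_less_Least[OF that[unfolded j_def]] .
    ultimately show ?thesis using j0(1) by (intro exI[of _ j]) (auto simp: Q_def)
  qed
  have Qball: "cball x (2*r) \<subseteq> B j" if "x \<in> Q j" for x j
  proof
    fix y assume "y \<in> cball x (2*r)"
    then have "dist x y \<le> 2*r" by simp
    moreover have "dist (c j) x < \<delta>" using that by (simp add: Q_def)
    ultimately have "dist (c j) y < \<rho>"
      using dist_triangle[of "c j" y x] by (simp add: \<delta>_def)
    then show "y \<in> B j" by (simp add: B_def)
  qed
  define Y where "Y j i \<omega> = npts (X \<omega>) (if i = (0::nat) then Q j else Rs j)" for j i \<omega>
  have Ym: "Y j i \<in> measurable M (count_space UNIV)" for j i
    unfolding Y_def by (rule meas) (simp add: Qb Rb)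
  define a where "a j = lam * measure lebesgue (Q j \<inter> Omega)" for j
  define b where "b j = lam * measure lebesgue (Rs j \<inter> Omega)" for j
  have law0: "measure M {\<omega>\<in>space M. Y j 0 \<omega> = k} = a j ^ k / fact k * exp (- a j)" for j k
    unfolding Y_def a_def using law[OF Qb] by simp
  have law1: "measure M {\<omega>\<in>space M. Y j 1 \<omega> = k} = b j ^ k / fact k * exp (- b j)" for j k
    unfolding Y_def b_def using law[OF Rb] by simp
  have indY: "indep_vars (\<lambda>_. count_space UNIV) (Y j) {..<2}" for j
  proof -
    have "indep_vars (\<lambda>_. count_space UNIV) (\<lambda>i \<omega>. npts (X \<omega>) ((\<lambda>i. if i = (0::nat) then Q j else Rs j) i)) {..<2}"
    proof (rule indep)
      have "Q j \<inter> Rs j = {}" "Rs j \<inter> Q j = {}" by (auto simp: Rs_def)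
      then show "disjoint_family_on (\<lambda>i. if i = (0::nat) then Q j else Rs j) {..<2}"
        by (auto simp: disjoint_family_on_def)
    qed (simp add: Qb Rb)
    then show ?thesis unfolding Y_def by simp
  qed
  have a0: "0 \<le> a j" for j using lam0 by (simp add: a_def)
  have b0: "0 \<le> b j" for j using lam0 by (simp add: b_def)
  have leb: "A \<in> sets borel \<Longrightarrow> A \<in> sets lebesgue" for A :: "'a set"
    by (simp add: sets_completionI_sets)
  have abB: "a j + b j \<le> D^3 + D" for j
  proof -
    have QO: "Q j \<inter> Omega \<in> fmeasurable lebesgue"
      by (rule fmeasurableI2[OF lmeasurable_cball[of "c j" \<rho>]]) (use QB[of j] leb[OF Qb] assms(3) in \<open>auto simp: B_def\<close>)
    have RO: "Rs j \<inter> Omega \<in> fmeasurable lebesgue"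
      by (rule fmeasurableI2[OF lmeasurable_cball[of "c j" \<rho>]]) (use leb[OF Rb] assms(3) in \<open>auto simp: B_def Rs_def\<close>)
    have "measure lebesgue (Q j \<inter> Omega) + measure lebesgue (Rs j \<inter> Omega)
        = measure lebesgue ((Q j \<inter> Omega) \<union> (Rs j \<inter> Omega))"
      using measure_Un3[OF QO RO] by (simp add: Rs_def Int_ac Diff_Int_distrib2 Int_Diff)
    also have "(Q j \<inter> Omega) \<union> (Rs j \<inter> Omega) = B j \<inter> Omega" using QB[of j] by (auto simp: Rs_def)
    also have "measure lebesgue (B j \<inter> Omega) \<le> measure lebesgue (B j)"
      by (rule measure_mono_fmeasurable) (use leb[OF Bb] assms(3) in \<open>auto simp: B_def\<close>)
    also have "measure lebesgue (B j) = measure lborel (B j)"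
      using Bb by simp
    finally have "a j + b j \<le> lam * measure lborel (B j)"
      using lam0 by (simp add: a_def b_def distrib_left[symmetric] mult_left_mono)
    then show ?thesis using mB by (simp add: B_def)
  qed
  define \<theta> where "\<theta> = 1 + 1/(2*D)"
  have th1: "1 \<le> \<theta>" using Dp by (simp add: \<theta>_def)
  have cell: "(\<integral>\<^sup>+\<omega>. ennreal (real (Y j 0 \<omega>)) * (if t \<le> real (Y j 0 \<omega> + Y j 1 \<omega>) then 1 else 0) \<partial>M)
     \<le> ennreal (a j * (1 / (2 * real d)))" for j
  proof -
    have "(\<integral>\<^sup>+\<omega>. ennreal (real (Y j 0 \<omega>)) * (if t \<le> real (Y j 0 \<omega> + Y j 1 \<omega>) then 1 else 0) \<partial>M)
      \<le> ennreal (a j * (\<theta> powr (1 - t) * exp ((a j + b j)*(\<theta>-1))))"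
      by (rule cell_bound[OF P Ym indY law0 law1 a0 b0 th1])
    also have "\<dots> \<le> ennreal (a j * (\<theta> powr (1 - t) * exp ((D^3 + D)*(\<theta>-1))))"
      using abB[of j] th1 a0[of j] by (intro ennreal_leI mult_left_mono) (auto intro: mult_right_mono)
    also have "\<theta> powr (1 - t) * exp ((D^3 + D)*(\<theta>-1)) \<le> 1 / (2 * real d)"
      using numeric_tail[OF dpos D8] by (simp add: \<theta>_def t_def)
    then have "ennreal (a j * (\<theta> powr (1 - t) * exp ((D^3 + D)*(\<theta>-1)))) \<le> ennreal (a j * (1 / (2 * real d)))"
      using a0[of j] by (intro ennreal_leI mult_left_mono) auto
    finally show ?thesis .
  qed
  define g where "g j \<omega> = ennreal (real (Y j 0 \<omega>)) * (if t \<le> real (Y j 0 \<omega> + Y j 1 \<omega>) then 1 else 0)" for j \<omega>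
  have gm: "g j \<in> borel_measurable M" for j
  proof -
    have m0: "(\<lambda>\<omega>. real (Y j i \<omega>)) \<in> borel_measurable M" for i
      using measurable_compose[OF Ym[of j i], of real borel] by simp
    show ?thesis unfolding g_def using m0[of 0] m0[of 1] by (simp add: of_nat_add) measurable
  qed
  have Ycard: "Y j 0 \<omega> = card (X \<omega> \<inter> Q j)" for j \<omega> by (simp add: Y_def npts_def)
  have pw: "AE \<omega> in M. ennreal (real (card {x \<in> X \<omega>.
              real (npts (X \<omega>) (cball x (2 * unit_vol_radius TYPE('a))))
                \<ge> Delta * (1 + Delta powr (-1/3))})) \<le> (\<Sum>j<n. g j \<omega>)"
    using fin AE_space
  proof eventually_elim
    case (elim \<omega>)
    define H where "H = {x \<in> X \<omega>. t \<le> real (npts (X \<omega>) (cball x (2 * r)))}"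
    have finX: "finite (X \<omega>)" using elim by simp
    have HX: "H \<subseteq> X \<omega>" by (auto simp: H_def)
    have "H \<subseteq> (\<Union>j\<in>{..<n}. H \<inter> Q j)"
      using HX Xsub[OF elim(2)] Qcov by blast
    then have "card H \<le> card (\<Union>j\<in>{..<n}. H \<inter> Q j)"
      using finX HX by (intro card_mono) (auto intro: finite_subset)
    also have "\<dots> \<le> (\<Sum>j<n. card (H \<inter> Q j))" by (rule card_UN_le) simp
    also have "\<dots> \<le> (\<Sum>j<n. if t \<le> real (Y j 0 \<omega> + Y j 1 \<omega>) then Y j 0 \<omega> else 0)"
    proof (rule sum_mono)
      fix j assume "j \<in> {..<n}"
      show "card (H \<inter> Q j) \<le> (if t \<le> real (Y j 0 \<omega> + Y j 1 \<omega>) then Y j 0 \<omega> else 0)"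
      proof (cases "H \<inter> Q j = {}")
        case True then show ?thesis by simp
      next
        case False
        then obtain x where x: "x \<in> H" "x \<in> Q j" by blast
        have "t \<le> real (npts (X \<omega>) (cball x (2 * r)))" using x by (simp add: H_def)
        also have "npts (X \<omega>) (cball x (2 * r)) \<le> npts (X \<omega>) (B j)"
          unfolding npts_def using Qball[OF x(2)] finX by (intro card_mono) auto
        also have "npts (X \<omega>) (B j) = Y j 0 \<omega> + Y j 1 \<omega>"
        proof -
          have "X \<omega> \<inter> B j = (X \<omega> \<inter> Q j) \<union> (X \<omega> \<inter> Rs j)" using QB[of j] by (auto simp: Rs_def)
          moreover have "(X \<omega> \<inter> Q j) \<inter> (X \<omega> \<inter> Rs j) = {}" by (auto simp: Rs_def)
          ultimately show ?thesis unfolding npts_def Y_def using finX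
            by (simp add: card_Un_disjoint)
        qed
        finally have tt: "t \<le> real (Y j 0 \<omega> + Y j 1 \<omega>)" by simp
        have "card (H \<inter> Q j) \<le> Y j 0 \<omega>" unfolding Ycard using finX HX by (intro card_mono) auto
        then show ?thesis using tt by simp
      qed
    qed
    finally have cH: "card H \<le> (\<Sum>j<n. if t \<le> real (Y j 0 \<omega> + Y j 1 \<omega>) then Y j 0 \<omega> else 0)" .
    have "ennreal (real (card H)) \<le> ennreal (real (\<Sum>j<n. if t \<le> real (Y j 0 \<omega> + Y j 1 \<omega>) then Y j 0 \<omega> else 0))"
      by (rule ennreal_leI, rule of_nat_mono, rule cH)
    also have "\<dots> = (\<Sum>j<n. g j \<omega>)"
      by (simp add: g_def of_nat_sum sum_ennreal[symmetric] del: sum_ennreal) (rule sum.cong, auto)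
    finally show ?case using thr by (simp add: H_def r_def)
  qed
  have Ym0: "(\<lambda>\<omega>. ennreal (real (Y j 0 \<omega>))) \<in> borel_measurable M" for j
    using measurable_compose[OF Ym[of j 0], of "\<lambda>k. ennreal (real k)" borel] by simp
  have EY: "(\<integral>\<^sup>+\<omega>. ennreal (real (Y j 0 \<omega>)) \<partial>M) = ennreal (a j)" for j
    using pois_integral[OF P Ym law0, of "\<lambda>k. ennreal (real k)"] pois_mgf1[OF a0[of j], of 1] by simp
  have "(\<integral>\<^sup>+ \<omega>. ennreal (real (card {x \<in> X \<omega>.
              real (npts (X \<omega>) (cball x (2 * unit_vol_radius TYPE('a))))
                \<ge> Delta * (1 + Delta powr (-1/3))})) \<partial>M) \<le> (\<integral>\<^sup>+\<omega>. (\<Sum>j<n. g j \<omega>) \<partial>M)"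
    by (rule nn_integral_mono_AE[OF pw])
  also have "\<dots> = (\<Sum>j<n. \<integral>\<^sup>+\<omega>. g j \<omega> \<partial>M)"
    by (rule nn_integral_sum) (simp add: gm)
  also have "\<dots> \<le> (\<Sum>j<n. ennreal (a j * (1 / (2 * real d))))"
    by (rule sum_mono) (use cell in \<open>simp add: g_def\<close>)
  also have "\<dots> = ennreal (1 / (2 * real d)) * (\<Sum>j<n. ennreal (a j))"
  proof -
    have "ennreal (a j * (1 / (2 * real d))) = ennreal (1 / (2 * real d)) * ennreal (a j)" for j
      using ennreal_mult''[of "1 / (2 * real d)" "a j"] dpos by (simp add: mult.commute)
    then show ?thesis by (simp add: sum_distrib_left)
  qed
  also have "(\<Sum>j<n. ennreal (a j)) = (\<integral>\<^sup>+\<omega>. ennreal (real (card (X \<omega>))) \<partial>M)"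
  proof -
    have "(\<integral>\<^sup>+\<omega>. ennreal (real (card (X \<omega>))) \<partial>M) = (\<integral>\<^sup>+\<omega>. (\<Sum>j<n. ennreal (real (Y j 0 \<omega>))) \<partial>M)"
    proof (rule nn_integral_cong_AE)
      show "AE \<omega> in M. ennreal (real (card (X \<omega>))) = (\<Sum>j<n. ennreal (real (Y j 0 \<omega>)))"
        using fin AE_space
      proof eventually_elim
        case (elim \<omega>)
        have "X \<omega> = (\<Union>j\<in>{..<n}. X \<omega> \<inter> Q j)" using Xsub[OF elim(2)] Qcov by blast
        then have "card (X \<omega>) = (\<Sum>j<n. card (X \<omega> \<inter> Q j))"
        proof -
          have dj: "\<forall>i::nat\<in>{..<n}. \<forall>j::nat\<in>{..<n}. i \<noteq> j \<longrightarrow> (X \<omega> \<inter> Q i) \<inter> (X \<omega> \<inter> Q j) = {}"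
          proof (intro ballI impI)
            fix i j :: nat assume "i \<noteq> j"
            then have "Q i \<inter> Q j = {}" by (rule Qdisj)
            then show "(X \<omega> \<inter> Q i) \<inter> (X \<omega> \<inter> Q j) = {}" by blast
          qed
          have "card (\<Union>j\<in>{..<n}. X \<omega> \<inter> Q j) = (\<Sum>j\<in>{..<n}. card (X \<omega> \<inter> Q j))"
            by (rule card_UN_disjoint) (use elim(1) dj in auto)
          then show ?thesis using \<open>X \<omega> = _\<close> by simp
        qed
        then show ?case by (simp add: Ycard of_nat_sum)
      qed
    qed
    also have "\<dots> = (\<Sum>j<n. \<integral>\<^sup>+\<omega>. ennreal (real (Y j 0 \<omega>)) \<partial>M)"
      by (rule nn_integral_sum) (simp add: Ym0)
    also have "\<dots> = (\<Sum>j<n. ennreal (a j))" by (simp add: EY)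
    finally show ?thesis by simp
  qed
  finally show ?thesis by (simp add: d_def)
qed

end
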